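(* Let $\{e_n\}_{n\in\mathbb{Z}}$ be a sequence of i.i.d. real random variables, and let $q,d\ge 1$ be integers, $r\in\mathbb{R}$, and $\mu_1,\mu_2,\phi_1,\dots,\phi_q,\psi_1,\dots,\psi_q\in\mathbb{R}$. Define $$a_n=\mu_2+e_n+\sum_{i=1}^q\psi_ie_{n-i},\qquad b_n=\mu_1+e_n+\sum_{i=1}^q\phi_ie_{n-i},$$ $$U_n=\mathbb{1}(a_n\le r),\qquad W_n=\mathbb{1}(b_n\le r)-\mathbb{1}(a_n\le r).$$ Assume $\mathbb{P}(a_n\le r,\ b_n\le r)+\mathbb{P}(a_n>r,\ b_n>r)\neq 0$. Then the series $$\alpha_{n-d}=\sum_{j=1}^{\infty}\Big[\Big(\prod_{s=1}^{j-1}W_{n-sd}\Big)U_{n-jd}\Big]$$ (with the empty product equal to $1$) converges in $L^1$ and almost surely for every $n\in\mathbb{Z}$, and the TMA$(q)$ equation $$y_n=\begin{cases}\mu_1+e_n+\sum_{i=1}^q\phi_ie_{n-i}, & \text{if } y_{n-d}\le r,\\ \mu_2+e_n+\sum_{i=1}^q\psi_ie_{n-i}, & \text{if } y_{n-d}>r,\end{cases}\qquad n\in\mathbb{Z},$$ has a strictly stationary and ergodic solution given by $$y_n=\mu_2+e_n+\sum_{i=1}^q\psi_ie_{n-i}+\Big[(\mu_1-\mu_2)+\sum_{i=1}^q(\phi_i-\psi_i)e_{n-i}\Big]\alpha_{n-d}\quad\text{a.s.}$$ Moreover this solution is unique: any process $\{\tilde y_n\}_{n\in\mathbb{Z}}$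 on the same probability space satisfying the TMA$(q)$ equation almost surely for all $n$ coincides with it almost surely for every $n$.
   Context: $\mathbb{1}(\cdot)$ denotes the indicator function. A solution of the TMA$(q)$ equation means a real-valued process $\{y_n\}_{n\in\mathbb{Z}}$ defined on the same probability space as $\{e_n\}$ such that the displayed equation holds almost surely for every $n\in\mathbb{Z}$. *)

theory Defs
  imports "HOL-Probability.Probability"
begin

text \<open>Moving-average part: mu + e_n + sum_{i=1}^q c_i e_{n-i}.
  a_n = ma_part mu2 psi, b_n = ma_part mu1 phi.\<close>
definition ma_part :: "real \<Rightarrow> (nat \<Rightarrow> real) \<Rightarrow> nat \<Rightarrow> (int \<Rightarrow> 'a \<Rightarrow> real) \<Rightarrow> int \<Rightarrow> 'a \<Rightarrow> real" where
  "ma_part mu c q e n \<omega> = mu + e n \<omega> + (\<Sum>i=1..q. c i * e (n - int i) \<omega>)"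

definition alpha_term ::
  "(int \<Rightarrow> 'a \<Rightarrow> real) \<Rightarrow> (int \<Rightarrow> 'a \<Rightarrow> real) \<Rightarrow> real \<Rightarrow> nat \<Rightarrow> int \<Rightarrow> nat \<Rightarrow> 'a \<Rightarrow> real" where
  "alpha_term a b r d n j \<omega> =
     (\<Prod>s\<in>{1..<j}. (of_bool (b (n - int s * int d) \<omega> \<le> r) - of_bool (a (n - int s * int d) \<omega> \<le> r)))
     * of_bool (a (n - int j * int d) \<omega> \<le> r)"

text \<open>alpha_{n-d} (indexed by n) as the sum over j \<ge> 1.\<close>
definition alpha_series ::
  "(int \<Rightarrow> 'a \<Rightarrow> real) \<Rightarrow> (int \<Rightarrow> 'a \<Rightarrow> real) \<Rightarrow> real \<Rightarrow> nat \<Rightarrow> int \<Rightarrow> 'a \<Rightarrow> real" where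
  "alpha_series a b r d n \<omega> = (\<Sum>j. alpha_term a b r d n (Suc j) \<omega>)"

definition iid_seq :: "'a measure \<Rightarrow> (int \<Rightarrow> 'a \<Rightarrow> real) \<Rightarrow> bool" where
  "iid_seq M e \<longleftrightarrow> (\<forall>n. e n \<in> borel_measurable M) \<and>
     prob_space.indep_vars M (\<lambda>_. borel) e UNIV \<and>
     (\<forall>n. distr M borel (e n) = distr M borel (e 0))"

definition proc_law :: "'a measure \<Rightarrow> (int \<Rightarrow> 'a \<Rightarrow> real) \<Rightarrow> (int \<Rightarrow> real) measure" where
  "proc_law M y = distr M (PiM UNIV (\<lambda>_. borel)) (\<lambda>\<omega> n. y n \<omega>)"

definition strictly_stationary :: "'a measure \<Rightarrow> (int \<Rightarrow> 'a \<Rightarrow> real) \<Rightarrow> bool" where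
  "strictly_stationary M y \<longleftrightarrow>
     (\<forall>k::int. proc_law M (\<lambda>n. y (n + k)) = proc_law M y)"

definition ergodic_process :: "'a measure \<Rightarrow> (int \<Rightarrow> 'a \<Rightarrow> real) \<Rightarrow> bool" where
  "ergodic_process M y \<longleftrightarrow>
     (\<forall>A \<in> sets (PiM (UNIV::int set) (\<lambda>_. (borel::real measure))).
        (\<lambda>x n. x (n + 1)) -` A = A \<longrightarrow>
        measure (proc_law M y) A = 0 \<or> measure (proc_law M y) A = 1)"

definition tma_solution ::
  "'a measure \<Rightarrow> (int \<Rightarrow> 'a \<Rightarrow> real) \<Rightarrow> nat \<Rightarrow> nat \<Rightarrow> real \<Rightarrow> real \<Rightarrow> real \<Rightarrow>
   (nat \<Rightarrow> real) \<Rightarrow> (nat \<Rightarrow> real) \<Rightarrow> (int \<Rightarrow> 'a \<Rightarrow> real) \<Rightarrow> bool" where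
  "tma_solution M e q d r mu1 mu2 phi psi y \<longleftrightarrow>
     (\<forall>n. AE \<omega> in M. y n \<omega> =
        (if y (n - int d) \<omega> \<le> r then ma_part mu1 phi q e n \<omega> else ma_part mu2 psi q e n \<omega>))"

end

theory Submission
  imports Defs
begin
definition Uf :: "(int \<Rightarrow> 'x \<Rightarrow> real) \<Rightarrow> real \<Rightarrow> int \<Rightarrow> 'x \<Rightarrow> real" where
  "Uf a r m \<omega> = of_bool (a m \<omega> \<le> r)"
definition Wf :: "(int \<Rightarrow> 'x \<Rightarrow> real) \<Rightarrow> (int \<Rightarrow> 'x \<Rightarrow> real) \<Rightarrow> real \<Rightarrow> int \<Rightarrow> 'x \<Rightarrow> real" where
  "Wf a b r m \<omega> = of_bool (b m \<omega> \<le> r) - of_bool (a m \<omega> \<le> r)"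
definition Sf where
  "Sf a b r d n N \<omega> = (\<Sum>j<N. alpha_term a b r d n (Suc j) \<omega>)"

lemma term_one: "alpha_term a b r d n (Suc 0) \<omega> = Uf a r (n - int d) \<omega>"
  by (simp add: alpha_term_def Uf_def)

lemma term_SS: "alpha_term a b r d n (Suc (Suc j)) \<omega> =
   Wf a b r (n - int d) \<omega> * alpha_term a b r d (n - int d) (Suc j) \<omega>"
proof -
  have "(\<Prod>s\<in>{1..<Suc (Suc j)}. (of_bool (b (n - int s * int d) \<omega> \<le> r) - of_bool (a (n - int s * int d) \<omega> \<le> r)) :: real)
    = Wf a b r (n - int d) \<omega> * (\<Prod>s\<in>{Suc 1..<Suc (Suc j)}. (of_bool (b (n - int s * int d) \<omega> \<le> r) - of_bool (a (n - int s * int d) \<omega> \<le> r)))"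
    by (subst prod.atLeast_Suc_lessThan) (auto simp: Wf_def)
  also have "(\<Prod>s\<in>{Suc 1..<Suc (Suc j)}. (of_bool (b (n - int s * int d) \<omega> \<le> r) - of_bool (a (n - int s * int d) \<omega> \<le> r)) :: real)
     = (\<Prod>s\<in>{1..<Suc j}. (of_bool (b (n - int d - int s * int d) \<omega> \<le> r) - of_bool (a (n - int d - int s * int d) \<omega> \<le> r)))"
    by (subst prod.shift_bounds_Suc_ivl) (simp add: algebra_simps)
  finally show ?thesis
    by (simp add: alpha_term_def algebra_simps)
qed

lemma Sf_Suc: "Sf a b r d n (Suc N) \<omega> = Uf a r (n - int d) \<omega> + Wf a b r (n - int d) \<omega> * Sf a b r d (n - int d) N \<omega>"
  unfolding Sf_def
  by (subst sum.lessThan_Suc_shift) (simp add: term_one term_SS sum_distrib_left)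

lemma Sf_01: "Sf a b r d n N \<omega> = 0 \<or> Sf a b r d n N \<omega> = 1"
proof (induction N arbitrary: n)
  case 0 then show ?case by (simp add: Sf_def)
next
  case (Suc N)
  from Suc[of "n - int d"] show ?case
    by (auto simp: Sf_Suc Uf_def Wf_def)
qed

lemma term_vanish:
  assumes "J \<ge> 1" "Wf a b r (n - int J * int d) \<omega> = 0" "j \<ge> J"
  shows "alpha_term a b r d n (Suc j) \<omega> = 0"
  unfolding alpha_term_def
  using assms by (subst prod_zero) (auto simp: Wf_def intro!: bexI[of _ J])

lemma alpha_eq_Sf:
  assumes "J \<ge> 1" "Wf a b r (n - int J * int d) \<omega> = 0"
  shows "summable (\<lambda>j. alpha_term a b r d n (Suc j) \<omega>)"
    and "alpha_series a b r d n \<omega> = Sf a b r d n J \<omega>"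
    and "\<And>N. N \<ge> J \<Longrightarrow> Sf a b r d n N \<omega> = Sf a b r d n J \<omega>"
proof -
  have s: "(\<lambda>j. alpha_term a b r d n (Suc j) \<omega>) sums (\<Sum>j\<in>{..<J}. alpha_term a b r d n (Suc j) \<omega>)"
    by (rule sums_finite) (use term_vanish[OF assms] in auto)
  then show "summable (\<lambda>j. alpha_term a b r d n (Suc j) \<omega>)" by (auto simp: summable_def)
  from s show "alpha_series a b r d n \<omega> = Sf a b r d n J \<omega>"
    by (simp add: alpha_series_def Sf_def sums_iff)
  fix N assume "N \<ge> J"
  then have e: "{..<N} = {..<J} \<union> {J..<N}" by auto
  have "(\<Sum>j\<in>{J..<N}. alpha_term a b r d n (Suc j) \<omega>) = 0"
    using term_vanish[OF assms] by (intro sum.neutral) auto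
  then show "Sf a b r d n N \<omega> = Sf a b r d n J \<omega>"
    unfolding Sf_def e by (subst sum.union_disjoint) auto
qed

lemma alpha_rec:
  assumes "J \<ge> 1" "Wf a b r (n - int d - int J * int d) \<omega> = 0"
  shows "summable (\<lambda>j. alpha_term a b r d n (Suc j) \<omega>)"
    and "alpha_series a b r d n \<omega> = Uf a r (n - int d) \<omega> + Wf a b r (n - int d) \<omega> * alpha_series a b r d (n - int d) \<omega>"
    and "alpha_series a b r d (n - int d) \<omega> = 0 \<or> alpha_series a b r d (n - int d) \<omega> = 1"
proof -
  have W2: "Wf a b r (n - int (Suc J) * int d) \<omega> = 0" using assms(2) by (simp add: algebra_simps)
  show "summable (\<lambda>j. alpha_term a b r d n (Suc j) \<omega>)"
    using alpha_eq_Sf(1)[OF _ W2] by simp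
  show "alpha_series a b r d n \<omega> = Uf a r (n - int d) \<omega> + Wf a b r (n - int d) \<omega> * alpha_series a b r d (n - int d) \<omega>"
    using alpha_eq_Sf(2)[OF _ W2] alpha_eq_Sf(2)[OF assms] by (simp add: Sf_Suc)
  show "alpha_series a b r d (n - int d) \<omega> = 0 \<or> alpha_series a b r d (n - int d) \<omega> = 1"
    using alpha_eq_Sf(2)[OF assms] Sf_01 by metis
qed

lemma ma_diff: "ma_part mu1 phi q e n \<omega> - ma_part mu2 psi q e n \<omega> =
   (mu1 - mu2) + (\<Sum>i=1..q. (phi i - psi i) * e (n - int i) \<omega>)"
  by (simp add: ma_part_def sum_subtractf left_diff_distrib)

lemma tma_det:
  fixes a b :: "int \<Rightarrow> 'x \<Rightarrow> real" and r :: real and d :: nat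
  defines "y \<equiv> \<lambda>n \<omega>. a n \<omega> + (b n \<omega> - a n \<omega>) * alpha_series a b r d n \<omega>"
  assumes "J \<ge> 1" "Wf a b r (n - int d - int J * int d) \<omega> = 0"
  shows "y n \<omega> = (if y (n - int d) \<omega> \<le> r then b n \<omega> else a n \<omega>)"
proof -
  note R = alpha_rec[OF assms(2,3)]
  from R(3) show ?thesis
  proof
    assume h: "alpha_series a b r d (n - int d) \<omega> = 0"
    then show ?thesis using R(2) by (auto simp: y_def Uf_def Wf_def)
  next
    assume h: "alpha_series a b r d (n - int d) \<omega> = 1"
    then show ?thesis using R(2) by (auto simp: y_def Uf_def Wf_def)
  qed
qed

definition Pf where
  "Pf a b r d n N \<omega> = (\<Prod>s\<in>{1..N}. Wf a b r (n - int s * int d) \<omega>)"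

lemma Pf_Suc: "Pf a b r d n (Suc N) \<omega> = Wf a b r (n - int d) \<omega> * Pf a b r d (n - int d) N \<omega>"
proof -
  have "{1..Suc N} = insert 1 {Suc 1..Suc N}" by auto
  then have "Pf a b r d n (Suc N) \<omega> = Wf a b r (n - int d) \<omega> * (\<Prod>s\<in>{Suc 1..Suc N}. Wf a b r (n - int s * int d) \<omega>)"
    unfolding Pf_def apply (simp only:) apply (subst prod.insert) by auto
  also have "(\<Prod>s\<in>{Suc 1..Suc N}. Wf a b r (n - int s * int d) \<omega>) = (\<Prod>s\<in>{1..N}. Wf a b r (n - int (Suc s) * int d) \<omega>)"
    by (subst prod.shift_bounds_cl_Suc_ivl) simp
  finally show ?thesis by (simp add: Pf_def algebra_simps)
qed

lemma uniq_det:
  fixes a b :: "int \<Rightarrow> 'x \<Rightarrow> real"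
  assumes tma: "\<And>m. y' m \<omega> = (if y' (m - int d) \<omega> \<le> r then b m \<omega> else a m \<omega>)"
  assumes "J \<ge> 1" "Wf a b r (n - int J * int d) \<omega> = 0"
  shows "y' n \<omega> = a n \<omega> + (b n \<omega> - a n \<omega>) * alpha_series a b r d n \<omega>"
proof -
  define I where "I m = (of_bool (y' (m - int d) \<omega> \<le> r) :: real)" for m
  have step: "I m = Uf a r (m - int d) \<omega> + Wf a b r (m - int d) \<omega> * I (m - int d)" for m
    using tma[of "m - int d"] by (auto simp: I_def Uf_def Wf_def)
  have main: "I m = Sf a b r d m N \<omega> + Pf a b r d m N \<omega> * I (m - int N * int d)" for N m
  proof (induction N arbitrary: m)
    case 0 then show ?case by (simp add: Sf_def Pf_def)
  next
    case (Suc N)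
    show ?case
      apply (subst step)
      apply (subst Suc)
      apply (simp add: Sf_Suc Pf_Suc algebra_simps)
      done
  qed
  have "Pf a b r d n J \<omega> = 0"
    unfolding Pf_def using assms(2,3) by (intro prod_zero) auto
  then have "I n = alpha_series a b r d n \<omega>"
    using main[of n J] alpha_eq_Sf(2)[OF assms(2,3)] by simp
  then show ?thesis using tma[of n] by (auto simp: I_def)
qed

definition sd :: "'x set \<Rightarrow> 'x set \<Rightarrow> 'x set" where "sd A C = (A - C) \<union> (C - A)"

lemma (in finite_measure) approx_sets:
  assumes gen: "sets M = sigma_sets (space M) G"
    and GA: "G \<subseteq> A0" and A0s: "A0 \<subseteq> sets M" and emp: "{} \<in> A0"
    and cmp: "\<And>C. C \<in> A0 \<Longrightarrow> space M - C \<in> A0"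
    and un: "\<And>C D. C \<in> A0 \<Longrightarrow> D \<in> A0 \<Longrightarrow> C \<union> D \<in> A0"
    and A: "A \<in> sets M"
  shows "\<forall>e>0. \<exists>C\<in>A0. measure M (sd A C) < e"
proof -
  have fin: "(\<Union>i<n. c i) \<in> A0" if "\<And>i. c i \<in> A0" for c and n :: nat
  proof (induction n)
    case 0 then show ?case using emp by simp
  next
    case (Suc n)
    have "(\<Union>i<Suc n. c i) = c n \<union> (\<Union>i<n. c i)" by (auto simp: lessThan_Suc)
    then show ?case using un that Suc by simp
  qed
  from A gen have "A \<in> sigma_sets (space M) G" by simp
  then show ?thesis
  proof induct
    case (Basic a)
    then show ?case using GA by (auto intro!: bexI[of _ a] simp: sd_def)
  next
    case Empty
    then show ?case using emp by (auto intro!: bexI[of _ "{}"] simp: sd_def)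
  next
    case (Compl a)
    have as: "a \<in> sets M" using Compl(1) gen by simp
    show ?case
    proof (intro allI impI)
      fix e :: real assume "e > 0"
      with Compl(2) obtain C where C: "C \<in> A0" "measure M (sd a C) < e" by auto
      have "C \<subseteq> space M" using C(1) A0s sets.sets_into_space by auto
      moreover have "a \<subseteq> space M" using as sets.sets_into_space by auto
      ultimately have "sd (space M - a) (space M - C) = sd a C" by (auto simp: sd_def)
      then show "\<exists>C\<in>A0. measure M (sd (space M - a) C) < e"
        using C cmp by (intro bexI[of _ "space M - C"]) auto
    qed
  next
    case (Union a)
    have as: "a i \<in> sets M" for i using Union(1) gen by simp
    show ?case
    proof (intro allI impI)
      fix e :: real assume e: "e > 0"
      define F where "F n = (\<Union>i<n. a i)" for n
      have Fs: "F n \<in> sets M" for n unfolding F_def using as by auto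
      have "incseq F" unfolding F_def incseq_def by force
      then have lim: "(\<lambda>n. measure M (F n)) \<longlonglongrightarrow> measure M (\<Union>n. F n)"
        using Fs by (intro finite_Lim_measure_incseq) auto
      have UF: "(\<Union>n. F n) = (\<Union>i. a i)" unfolding F_def by auto
      from lim e obtain N where N: "\<bar>measure M (F N) - measure M (\<Union>i. a i)\<bar> < e/2"
        unfolding UF by (auto dest!: LIMSEQ_D[of _ _ "e/2"] simp: dist_real_def)
      define e' where "e' = e / (2 * (real N + 1))"
      have e': "e' > 0" using e by (simp add: e'_def)
      have "\<forall>i. \<exists>C. C \<in> A0 \<and> measure M (sd (a i) C) < e'" using Union(2) e' by blast
      then obtain c where c: "\<And>i. c i \<in> A0" "\<And>i. measure M (sd (a i) (c i)) < e'"
        by metis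
      have cs: "c i \<in> sets M" for i using c A0s by auto
      define C where "C = (\<Union>i<N. c i)"
      have CA: "C \<in> A0" unfolding C_def using fin c by auto
      have sub: "sd (\<Union>i. a i) C \<subseteq> ((\<Union>i. a i) - F N) \<union> (\<Union>i<N. sd (a i) (c i))"
        unfolding sd_def C_def F_def by blast
      have U: "(\<Union>i. a i) \<in> sets M" using as by auto
      have "measure M (sd (\<Union>i. a i) C) \<le> measure M (((\<Union>i. a i) - F N) \<union> (\<Union>i<N. sd (a i) (c i)))"
        using sub U Fs as cs by (intro finite_measure_mono) (auto simp: sd_def)
      also have "\<dots> \<le> measure M ((\<Union>i. a i) - F N) + measure M (\<Union>i<N. sd (a i) (c i))"
        using U Fs as cs by (intro measure_subadditive) (auto simp: sd_def)
      also have "measure M (\<Union>i<N. sd (a i) (c i)) \<le> (\<Sum>i<N. measure M (sd (a i) (c i)))"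
        using as cs by (intro finite_measure_subadditive_finite) (auto simp: sd_def)
      also have "\<dots> \<le> (\<Sum>i<N. e')" using c(2) by (intro sum_mono) (auto intro: less_imp_le)
      also have "measure M ((\<Union>i. a i) - F N) = measure M (\<Union>i. a i) - measure M (F N)"
        using U Fs by (intro finite_measure_Diff) (auto simp: F_def)
      finally have "measure M (sd (\<Union>i. a i) C) \<le> measure M (\<Union>i. a i) - measure M (F N) + real N * e'"
        by simp
      also have "real N * e' < e / 2"
        using e by (simp add: e'_def field_simps)
      finally have "measure M (sd (\<Union>i. a i) C) < e" using N by linarith
      then show "\<exists>C\<in>A0. measure M (sd (\<Union>i. a i) C) < e" using CA by blast
    qed
  qed
qed

abbreviation PS :: "(int \<Rightarrow> real) measure" where
  "PS \<equiv> PiM (UNIV::int set) (\<lambda>_. (borel::real measure))"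

definition sh :: "int \<Rightarrow> (int \<Rightarrow> real) \<Rightarrow> (int \<Rightarrow> real)" where
  "sh k x = (\<lambda>n. x (n + k))"

definition depends :: "int set \<Rightarrow> (int \<Rightarrow> real) set \<Rightarrow> bool" where
  "depends J C \<longleftrightarrow> (\<forall>x x'. (\<forall>j\<in>J. x j = x' j) \<longrightarrow> (x \<in> C \<longleftrightarrow> x' \<in> C))"

lemma space_PS: "space PS = UNIV"
  by (auto simp: space_PiM)

lemma sh_measurable[measurable]: "sh k \<in> measurable PS PS"
  unfolding sh_def by (rule measurable_PiM_single') (auto simp: space_PiM)

lemma sh_add: "sh (k + 1) = sh k \<circ> sh 1"
  by (auto simp: sh_def fun_eq_iff algebra_simps)

lemma sh_inv_nat: "sh 1 -` B = B \<Longrightarrow> sh (int k) -` B = B"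
proof (induction k)
  case 0 then show ?case by (simp add: sh_def)
next
  case (Suc k)
  have "sh (int (Suc k)) -` B = sh 1 -` (sh (int k) -` B)"
    using sh_add[of "int k"] by (simp add: vimage_comp add.commute)
  then show ?case using Suc by simp
qed

lemma depends_sh: "depends J C \<Longrightarrow> depends ((\<lambda>j. j + k) ` J) (sh k -` C)"
  unfolding depends_def sh_def by auto

lemma sq_diff_le: "0 \<le> x \<Longrightarrow> x \<le> 1 \<Longrightarrow> 0 \<le> y \<Longrightarrow> y \<le> (1::real) \<Longrightarrow> \<bar>x^2 - y^2\<bar> \<le> 2 * \<bar>x - y\<bar>"
proof -
  assume h: "0 \<le> x" "x \<le> 1" "0 \<le> y" "y \<le> 1"
  have "\<bar>x^2 - y^2\<bar> = \<bar>x - y\<bar> * \<bar>x + y\<bar>"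
    by (simp add: power2_eq_square abs_mult[symmetric] algebra_simps)
  also have "\<dots> \<le> \<bar>x - y\<bar> * 2" using h by (intro mult_left_mono) auto
  finally show ?thesis by simp
qed

lemma (in finite_measure) abs_measure_diff_sd:
  assumes "X \<in> sets M" "Y \<in> sets M"
  shows "\<bar>measure M X - measure M Y\<bar> \<le> measure M (sd X Y)"
proof -
  have s: "sd X Y \<in> sets M" using assms by (auto simp: sd_def)
  have "measure M X \<le> measure M (Y \<union> sd X Y)"
    using assms s by (intro finite_measure_mono) (auto simp: sd_def)
  also have "\<dots> \<le> measure M Y + measure M (sd X Y)"
    using assms s by (intro measure_subadditive) auto
  finally have 1: "measure M X \<le> measure M Y + measure M (sd X Y)" .
  have "measure M Y \<le> measure M (X \<union> sd X Y)"
    using assms s by (intro finite_measure_mono) (auto simp: sd_def)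
  also have "\<dots> \<le> measure M X + measure M (sd X Y)"
    using assms s by (intro measure_subadditive) auto
  finally have 2: "measure M Y \<le> measure M X + measure M (sd X Y)" .
  from 1 2 show ?thesis by linarith
qed

locale shift_indep = prob_space L for L :: "(int \<Rightarrow> real) measure" +
  assumes sets_L: "sets L = sets PS"
  and shift_inv: "\<And>k. distr L PS (sh k) = L"
  and indep: "\<And>C D J K. C \<in> sets PS \<Longrightarrow> D \<in> sets PS \<Longrightarrow> finite J \<Longrightarrow> finite K \<Longrightarrow> J \<inter> K = {}
      \<Longrightarrow> depends J C \<Longrightarrow> depends K D \<Longrightarrow> prob (C \<inter> D) = prob C * prob D"
begin

lemma space_L: "space L = UNIV"
  using sets_eq_imp_space_eq[OF sets_L] space_PS by simp

lemma sh_sets: "S \<in> sets PS \<Longrightarrow> sh k -` S \<in> sets PS"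
  using measurable_sets[OF sh_measurable, of S k] by (simp add: space_PS)

lemma prob_sh: assumes "S \<in> sets PS" shows "prob (sh k -` S) = prob S"
proof -
  have "prob S = measure (distr L PS (sh k)) S" using shift_inv by simp
  also have "\<dots> = prob (sh k -` S \<inter> space L)"
    using assms by (intro measure_distr) (auto simp: measurable_cong_sets[OF sets_L])
  finally show ?thesis by (simp add: space_L)
qed

lemma ergodic:
  assumes B: "B \<in> sets PS" and inv: "sh 1 -` B = B"
  shows "prob B = 0 \<or> prob B = 1"
proof -
  define A0 where "A0 = {C \<in> sets PS. \<exists>J. finite J \<and> depends J C}"
  have gen: "sets L = sigma_sets (space L) (prod_algebra UNIV (\<lambda>_::int. (borel::real measure)))"
    unfolding sets_L space_L sets_PiM by (simp add: space_PiM)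
  have GA: "prod_algebra UNIV (\<lambda>_::int. (borel::real measure)) \<subseteq> A0"
  proof
    fix X assume X: "X \<in> prod_algebra UNIV (\<lambda>_::int. (borel::real measure))"
    then have Xs: "X \<in> sets PS" unfolding sets_PiM by (rule sigma_sets.Basic)
    from X show "X \<in> A0"
    proof (rule prod_algebraE)
      fix J E assume "X = prod_emb UNIV (\<lambda>_. borel) J (Pi\<^sub>E J E)" "finite J"
      then show "X \<in> A0" using Xs unfolding A0_def depends_def
        by (auto simp: prod_emb_def PiE_iff intro!: exI[of _ J])
    qed
  qed
  have A0s: "A0 \<subseteq> sets L" unfolding A0_def sets_L by auto
  have emp: "{} \<in> A0" unfolding A0_def depends_def by auto
  have cmp: "space L - C \<in> A0" if "C \<in> A0" for C
  proof -
    from that obtain J where J: "C \<in> sets PS" "finite J" "depends J C" unfolding A0_def by auto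
    then have "space PS - C \<in> sets PS" by auto
    moreover have "depends J (space PS - C)" using J(3) unfolding depends_def space_PS by auto
    ultimately show ?thesis using J(2) unfolding A0_def space_L space_PS by auto
  qed
  have un: "C \<union> D \<in> A0" if "C \<in> A0" "D \<in> A0" for C D
  proof -
    from that obtain J K where "finite J" "depends J C" "finite K" "depends K D" "C \<in> sets PS" "D \<in> sets PS"
      unfolding A0_def by auto
    then have "depends (J \<union> K) (C \<union> D)" unfolding depends_def
    proof (intro allI impI)
      fix x x' :: "int \<Rightarrow> real" assume h: "\<forall>j\<in>J \<union> K. x j = x' j"
      have "x \<in> C \<longleftrightarrow> x' \<in> C" using h \<open>depends J C\<close> unfolding depends_def by blast
      moreover have "x \<in> D \<longleftrightarrow> x' \<in> D" using h \<open>depends K D\<close> unfolding depends_def by blast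
      ultimately show "x \<in> C \<union> D \<longleftrightarrow> x' \<in> C \<union> D" by blast
    qed
    then show ?thesis using \<open>finite J\<close> \<open>finite K\<close> \<open>C \<in> sets PS\<close> \<open>D \<in> sets PS\<close>
      unfolding A0_def by (auto intro!: exI[of _ "J \<union> K"])
  qed
  have Bs: "B \<in> sets L" using B sets_L by simp
  note appr = approx_sets[OF gen GA A0s emp cmp un Bs]
  have key: "\<bar>prob B - (prob B)^2\<bar> < 4 * e" if e: "e > 0" for e
  proof -
    from appr e obtain C J where C: "C \<in> sets PS" "finite J" "depends J C" "prob (sd B C) < e"
      unfolding A0_def by blast
    define R where "R = (\<Sum>j\<in>J. nat \<bar>j\<bar>)"
    have jR: "\<bar>j\<bar> \<le> int R" if "j \<in> J" for j
    proof -
      have "nat \<bar>j\<bar> \<le> R" unfolding R_def using C(2) that by (intro member_le_sum) auto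
      then show ?thesis by linarith
    qed
    define k where "k = int (2 * R + 1)"
    define Ck where "Ck = sh k -` C"
    have Cks: "Ck \<in> sets PS" unfolding Ck_def using C(1) by (rule sh_sets)
    have disj: "J \<inter> (\<lambda>j. j + k) ` J = {}"
    proof (rule ccontr)
      assume "J \<inter> (\<lambda>j. j + k) ` J \<noteq> {}"
      then obtain j j2 where "j \<in> J" "j2 \<in> J" "j = j2 + k" by auto
      with jR[of j] jR[of j2] show False unfolding k_def by linarith
    qed
    have "prob (C \<inter> Ck) = prob C * prob Ck"
      using C Cks disj unfolding Ck_def by (intro indep[of _ _ J "(\<lambda>j. j + k) ` J"] depends_sh) auto
    also have "prob Ck = prob C" unfolding Ck_def using C(1) by (rule prob_sh)
    finally have pCC: "prob (C \<inter> Ck) = (prob C)^2" by (simp add: power2_eq_square)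
    have invk: "sh k -` B = B" unfolding k_def by (rule sh_inv_nat[OF inv])
    have "sd B Ck = sh k -` (sd B C)" unfolding Ck_def sd_def using invk by auto
    then have pBCk: "prob (sd B Ck) < e"
      using C B prob_sh[of "sd B C" k] by (simp add: sd_def)
    have BLs: "B \<in> events" "C \<in> events" "Ck \<in> events" using B C Cks sets_L by auto
    have "\<bar>prob (B \<inter> B) - prob (C \<inter> Ck)\<bar> \<le> prob (sd (B \<inter> B) (C \<inter> Ck))"
      using BLs by (intro abs_measure_diff_sd) auto
    also have "\<dots> \<le> prob (sd B C \<union> sd B Ck)"
      using BLs by (intro finite_measure_mono) (auto simp: sd_def)
    also have "\<dots> \<le> prob (sd B C) + prob (sd B Ck)"
      using BLs by (intro measure_subadditive) (auto simp: sd_def)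
    finally have 1: "\<bar>prob B - (prob C)^2\<bar> < 2 * e" using C(4) pBCk pCC by simp
    have "\<bar>prob B - prob C\<bar> \<le> prob (sd B C)" using BLs by (intro abs_measure_diff_sd) auto
    then have "\<bar>prob B - prob C\<bar> < e" using C(4) by simp
    moreover have "\<bar>(prob C)^2 - (prob B)^2\<bar> \<le> 2 * \<bar>prob C - prob B\<bar>"
      by (intro sq_diff_le) auto
    ultimately have 2: "\<bar>(prob C)^2 - (prob B)^2\<bar> < 2 * e" by (simp add: abs_minus_commute)
    from 1 2 show ?thesis by linarith
  qed
  have "prob B = (prob B)^2"
  proof (rule ccontr)
    assume "prob B \<noteq> (prob B)^2"
    then have "\<bar>prob B - (prob B)^2\<bar> / 4 > 0" by simp
    from key[OF this] show False by simp
  qed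
  then show ?thesis by (simp add: power2_eq_square)
qed

end

definition Ef :: "(int \<Rightarrow> 'a \<Rightarrow> real) \<Rightarrow> 'a \<Rightarrow> (int \<Rightarrow> real)" where
  "Ef e \<omega> = (\<lambda>n. e n \<omega>)"

lemma Ef_eq: "Ef e = (\<lambda>\<omega> n. e n \<omega>)" by (rule ext) (simp add: Ef_def)

locale iid_ctx = prob_space M for M :: "'a measure" +
  fixes e :: "int \<Rightarrow> 'a \<Rightarrow> real"
  assumes iid: "iid_seq M e"
begin

lemma e_meas[measurable]: "e n \<in> borel_measurable M"
  using iid by (simp add: iid_seq_def)

lemma E_meas[measurable]: "Ef e \<in> measurable M PS"
  unfolding Ef_def by (rule measurable_PiM_single') (auto simp: space_PiM)

lemma ind: "indep_vars (\<lambda>_. borel) e UNIV"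
  using iid by (simp add: iid_seq_def)

abbreviation "D \<equiv> distr M borel (e 0)"

lemma L_eq: "distr M PS (Ef e) = PiM UNIV (\<lambda>_. D)"
proof -
  have "distr M PS (\<lambda>x. \<lambda>i\<in>UNIV. e i x) = PiM UNIV (\<lambda>i. distr M borel (e i))"
    using ind by (subst (asm) indep_vars_iff_distr_eq_PiM) auto
  moreover have "distr M borel (e i) = D" for i using iid by (simp add: iid_seq_def)
  then have "(\<lambda>i. distr M borel (e i)) = (\<lambda>_. D)" by (intro ext)
  ultimately show ?thesis by (simp add: Ef_eq restrict_UNIV)
qed

lemma L_prob: "prob_space (distr M PS (Ef e))"
  by (intro prob_space_distr) simp

lemma L_shift: "distr (distr M PS (Ef e)) PS (sh k) = distr M PS (Ef e)"
proof -
  have D: "prob_space D" by (intro prob_space_distr) simp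
  have "distr (PiM UNIV (\<lambda>_. D)) (PiM UNIV (\<lambda>_. D)) (\<lambda>\<omega>. \<lambda>n\<in>UNIV. \<omega> (n + k)) = PiM UNIV (\<lambda>_. D)"
  proof -
    have "inj_on (\<lambda>n::int. n + k) UNIV" by (auto simp: inj_on_def)
    then show ?thesis using distr_PiM_reindex[of UNIV "\<lambda>_. D" "\<lambda>n. n + k" UNIV] D by simp
  qed
  moreover have "distr (PiM UNIV (\<lambda>_. D)) PS (sh k) = distr (PiM UNIV (\<lambda>_. D)) (PiM UNIV (\<lambda>_. D)) (\<lambda>\<omega>. \<lambda>n\<in>UNIV. \<omega> (n + k))"
  proof -
    have "sets PS = sets (PiM UNIV (\<lambda>_. D))" by (rule sets_PiM_cong) auto
    then show ?thesis by (intro distr_cong) (auto simp: sh_def)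
  qed
  ultimately show ?thesis unfolding L_eq by simp
qed

definition ext :: "int set \<Rightarrow> (int \<Rightarrow> real) \<Rightarrow> (int \<Rightarrow> real)" where
  "ext J z = (\<lambda>n. if n \<in> J then z n else 0)"

lemma ext_meas: "ext J \<in> measurable (PiM J (\<lambda>_. borel)) PS"
  unfolding ext_def
proof (rule measurable_PiM_single')
  fix i :: int
  show "(\<lambda>\<omega>. if i \<in> J then \<omega> i else 0) \<in> borel_measurable (PiM J (\<lambda>_. borel))"
    by (cases "i \<in> J") auto
qed (auto simp: space_PiM)

lemma E_pt:
  assumes dep: "depends J C"
  shows "Ef e \<omega> \<in> C \<longleftrightarrow> ext J (restrict (\<lambda>i. e i \<omega>) J) \<in> C"
proof -
  have "\<forall>j\<in>J. Ef e \<omega> j = ext J (restrict (\<lambda>i. e i \<omega>) J) j" by (auto simp: ext_def Ef_def)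
  then show ?thesis using dep unfolding depends_def by blast
qed

lemma E_pre:
  assumes C: "C \<in> sets PS" and dep: "depends J C"
  shows "Ef e -` C \<inter> space M = (\<lambda>\<omega>. restrict (\<lambda>i. e i \<omega>) J) -` (ext J -` C \<inter> space (PiM J (\<lambda>_. borel))) \<inter> space M"
proof -
  have "Ef e \<omega> \<in> C \<longleftrightarrow> ext J (restrict (\<lambda>i. e i \<omega>) J) \<in> C" for \<omega>
  proof -
    have "\<forall>j\<in>J. Ef e \<omega> j = ext J (restrict (\<lambda>i. e i \<omega>) J) j" by (auto simp: ext_def Ef_def)
    then show ?thesis using dep unfolding depends_def by blast
  qed
  then show ?thesis by (auto simp: space_PiM)
qed

lemma L_indep:
  assumes C: "C \<in> sets PS" and Dd: "Dd \<in> sets PS" and "J \<inter> K = {}"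
    and dC: "depends J C" and dD: "depends K Dd"
  shows "measure (distr M PS (Ef e)) (C \<inter> Dd) = measure (distr M PS (Ef e)) C * measure (distr M PS (Ef e)) Dd"
proof -
  let ?XJ = "\<lambda>\<omega>. restrict (\<lambda>i. e i \<omega>) J" and ?XK = "\<lambda>\<omega>. restrict (\<lambda>i. e i \<omega>) K"
  let ?C' = "ext J -` C \<inter> space (PiM J (\<lambda>_. borel))" and ?D' = "ext K -` Dd \<inter> space (PiM K (\<lambda>_. borel))"
  have iv: "indep_var (PiM J (\<lambda>_. borel)) ?XJ (PiM K (\<lambda>_. borel)) ?XK"
    using assms by (intro indep_var_restrict[OF ind]) auto
  have C's: "?C' \<in> sets (PiM J (\<lambda>_. borel))" using C ext_meas by (rule measurable_sets[rotated])
  have D's: "?D' \<in> sets (PiM K (\<lambda>_. borel))" using Dd ext_meas by (rule measurable_sets[rotated])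
  have CD: "C \<inter> Dd \<in> sets PS" using C Dd by auto
  have "measure (distr M PS (Ef e)) (C \<inter> Dd) = prob (Ef e -` (C \<inter> Dd) \<inter> space M)"
    using CD by (intro measure_distr) auto
  also have "Ef e -` (C \<inter> Dd) \<inter> space M = (\<lambda>x. (?XJ x, ?XK x)) -` (?C' \<times> ?D') \<inter> space M"
    using E_pt[OF dC] E_pt[OF dD] by (auto simp: space_PiM)
  also have "prob \<dots> = prob (?XJ -` ?C' \<inter> space M) * prob (?XK -` ?D' \<inter> space M)"
    by (rule indep_varD[OF iv C's D's])
  also have "?XJ -` ?C' \<inter> space M = Ef e -` C \<inter> space M" using E_pre[OF C dC] by simp
  also have "?XK -` ?D' \<inter> space M = Ef e -` Dd \<inter> space M" using E_pre[OF Dd dD] by simp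
  also have "prob (Ef e -` C \<inter> space M) = measure (distr M PS (Ef e)) C"
    using C by (intro measure_distr[symmetric]) auto
  also have "prob (Ef e -` Dd \<inter> space M) = measure (distr M PS (Ef e)) Dd"
    using Dd by (intro measure_distr[symmetric]) auto
  finally show ?thesis .
qed

lemma L_shift_indep: "shift_indep (distr M PS (Ef e))"
  unfolding shift_indep_def shift_indep_axioms_def
  using L_prob L_shift L_indep by auto

end

context shift_indep begin

lemma vanish:
  fixes W :: "int \<Rightarrow> (int \<Rightarrow> real) \<Rightarrow> real" and q d :: nat
  assumes Wm: "\<And>m. W m \<in> borel_measurable PS"
    and Wloc: "\<And>m x x'. (\<forall>j\<in>{m - int q..m}. x j = x' j) \<Longrightarrow> W m x = W m x'"
    and Wsh: "\<And>m x. W m x = W 0 (sh m x)"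
    and p: "prob {x. W 0 x = 0} > 0" and d: "d \<ge> 1"
  shows "prob {x. \<forall>J\<ge>1. W (n - int J * int d) x \<noteq> 0} = 0"
proof -
  define p where "p = prob {x. W 0 x = 0}"
  define c where "c m = n - int ((q+1)*m) * int d" for m
  define F where "F m = {x. W (c m) x \<noteq> 0}" for m
  define G where "G K = {x. \<forall>m\<in>{1..K}. x \<in> F m}" for K
  have setsW: "{x. P (W m x)} \<in> sets PS" if "Measurable.pred borel P" for P m
  proof -
    have "{x \<in> space PS. P (W m x)} \<in> sets PS" using Wm[of m] that by measurable
    then show ?thesis by (simp add: space_PS)
  qed
  have Fs: "F m \<in> sets PS" for m unfolding F_def by (rule setsW) auto
  have Gs: "G K \<in> sets PS" for K
  proof -
    have "G K = (\<Inter>m\<in>{1..K}. F m) \<inter> space PS" unfolding G_def by (auto simp: space_PS)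
    then show ?thesis using Fs by auto
  qed
  have W0s: "{x. W 0 x = 0} \<in> sets PS" by (rule setsW) auto
  have pF: "prob (F m) = 1 - p" for m
  proof -
    have "F m = space L - sh (c m) -` {x. W 0 x = 0}" unfolding F_def space_L using Wsh by auto
    then have "prob (F m) = 1 - prob (sh (c m) -` {x. W 0 x = 0})"
      using sh_sets[OF W0s] sets_L by (simp add: prob_compl)
    then show ?thesis using prob_sh[OF W0s] p_def by simp
  qed
  have depG: "depends {c K - int q..n} (G K)" for K
    unfolding depends_def
  proof (intro allI impI)
    fix x x' :: "int \<Rightarrow> real" assume h: "\<forall>j\<in>{c K - int q..n}. x j = x' j"
    have "W (c m) x = W (c m) x'" if "m \<in> {1..K}" for m
    proof (rule Wloc, intro ballI)
      fix j assume j: "j \<in> {c m - int q..c m}"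
      have "(q+1)*m \<le> (q+1)*K" using that by (intro mult_le_mono2) auto
      then have "int ((q+1)*m) \<le> int ((q+1)*K)" by (simp only: of_nat_le_iff)
      then have "int ((q+1)*m) * int d \<le> int ((q+1)*K) * int d"
        by (rule mult_right_mono) simp
      then have "c K \<le> c m" "c m \<le> n" unfolding c_def by auto
      then show "x j = x' j" using h j by auto
    qed
    then show "x \<in> G K \<longleftrightarrow> x' \<in> G K" unfolding G_def F_def by auto
  qed
  have depF: "depends {c m - int q..c m} (F m)" for m
    unfolding depends_def F_def using Wloc[of "c m"] by (metis (mono_tags, lifting) mem_Collect_eq)
  have disj: "{c K - int q..n} \<inter> {c (Suc K) - int q..c (Suc K)} = {}" for K
  proof -
    have 1: "int ((q+1)*Suc K) * int d = int ((q+1)*K) * int d + int ((q+1)*d)" by (simp add: algebra_simps)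
    have "(q + 1)*1 \<le> (q+1)*d" using d by (intro mult_le_mono2)
    then have "q < (q+1)*d" by simp
    then have 2: "int q < int ((q+1)*d)" by (simp only: of_nat_less_iff)
    have "c (Suc K) < c K - int q" unfolding c_def using 1 2 by linarith
    then show ?thesis by auto
  qed
  have pG: "prob (G K) = (1 - p)^K" for K
  proof (induction K)
    case 0
    have "G 0 = space L" unfolding G_def space_L by auto
    then show ?case using prob_space by simp
  next
    case (Suc K)
    have "{1..Suc K} = insert (Suc K) {1..K}" by auto
    then have "G (Suc K) = G K \<inter> F (Suc K)" unfolding G_def by auto
    then have "prob (G (Suc K)) = prob (G K) * prob (F (Suc K))"
      using indep[OF Gs Fs _ _ disj depG depF] by simp
    then show ?case using Suc pF by simp
  qed
  define N where "N = {x. \<forall>J\<ge>1. W (n - int J * int d) x \<noteq> 0}"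
  have Ns: "N \<in> sets PS"
  proof -
    have "N = (\<Inter>J\<in>{1..}. {x. W (n - int J * int d) x \<noteq> 0}) \<inter> space PS"
      unfolding N_def by (auto simp: space_PS)
    moreover have "{x. W (n - int J * int d) x \<noteq> 0} \<in> sets PS" for J by (rule setsW) auto
    ultimately show ?thesis by auto
  qed
  have NG: "N \<subseteq> G K" for K
  proof
    fix x assume "x \<in> N"
    then have all: "\<forall>J\<ge>1. W (n - int J * int d) x \<noteq> 0" unfolding N_def by simp
    have "W (n - int ((q+1)*m) * int d) x \<noteq> 0" if "m \<ge> 1" for m
    proof -
      have "(q+1)*m \<ge> 1" using that by simp
      then show ?thesis using all by blast
    qed
    then show "x \<in> G K" unfolding G_def F_def c_def by auto
  qed
  have le: "prob N \<le> (1 - p)^K" for K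
  proof -
    have "prob N \<le> prob (G K)" using NG[of K] Gs[of K] sets_L by (intro finite_measure_mono) auto
    then show ?thesis using pG[of K] by simp
  qed
  have p01: "0 < p" "p \<le> 1" using p p_def by auto
  have "(\<lambda>K. (1 - p)^K) \<longlonglongrightarrow> 0" using p01 by (intro LIMSEQ_power_zero) auto
  then have "prob N \<le> 0" using le by (intro LIMSEQ_le_const) auto
  then show ?thesis using N_def by (simp add: measure_nonneg antisym)
qed

lemma vanish_AE:
  fixes W :: "int \<Rightarrow> (int \<Rightarrow> real) \<Rightarrow> real" and q d :: nat
  assumes Wm: "\<And>m. W m \<in> borel_measurable PS"
    and Wloc: "\<And>m x x'. (\<forall>j\<in>{m - int q..m}. x j = x' j) \<Longrightarrow> W m x = W m x'"
    and Wsh: "\<And>m x. W m x = W 0 (sh m x)"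
    and p: "prob {x. W 0 x = 0} > 0" and d: "d \<ge> 1"
  shows "AE x in L. \<exists>J\<ge>1. W (n - int J * int d) x = 0"
proof (rule AE_I')
  define N where "N = {x. \<forall>J\<ge>1. W (n - int J * int d) x \<noteq> 0}"
  have "N = (\<Inter>J\<in>{1..}. {x \<in> space PS. W (n - int J * int d) x \<noteq> 0}) \<inter> space PS"
    unfolding N_def by (auto simp: space_PS)
  moreover have "{x \<in> space PS. W (n - int J * int d) x \<noteq> 0} \<in> sets PS" for J
    using Wm[of "n - int J * int d"] by measurable
  ultimately have Ns: "N \<in> sets L" using sets_L by auto
  have "prob N = 0" unfolding N_def by (rule vanish[OF assms])
  then show "N \<in> null_sets L" using Ns by (simp add: null_sets_def emeasure_eq_measure)
  show "{x \<in> space L. \<not> (\<exists>J\<ge>1. W (n - int J * int d) x = 0)} \<subseteq> N" unfolding N_def by auto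
qed

end

definition ee :: "int \<Rightarrow> (int \<Rightarrow> real) \<Rightarrow> real" where "ee n x = x n"

lemma ma_part_meas[measurable]: "ma_part mu c q ee n \<in> borel_measurable PS"
  unfolding ma_part_def ee_def by measurable

lemma alpha_term_meas:
  assumes [measurable]: "\<And>m. a m \<in> borel_measurable N" "\<And>m. b m \<in> borel_measurable N"
  shows "alpha_term a b r d n j \<in> borel_measurable N"
  unfolding alpha_term_def by measurable

lemma alpha_series_meas:
  assumes "\<And>m. a m \<in> borel_measurable N" "\<And>m. b m \<in> borel_measurable N"
  shows "alpha_series a b r d n \<in> borel_measurable N"
proof -
  have "(\<lambda>x. \<Sum>j. alpha_term a b r d n (Suc j) x) \<in> borel_measurable N"
    using alpha_term_meas[OF assms] by (intro borel_measurable_suminf)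
  then show ?thesis unfolding alpha_series_def[abs_def] .
qed

lemma ma_part_sh: "ma_part mu c q ee n (sh k x) = ma_part mu c q ee (n + k) x"
  by (simp add: ma_part_def ee_def sh_def algebra_simps)

lemma alpha_term_sh:
  assumes "\<And>n. a n (sh k x) = a (n + k) x" "\<And>n. b n (sh k x) = b (n + k) x"
  shows "alpha_term a b r d n j (sh k x) = alpha_term a b r d (n + k) j x"
  unfolding alpha_term_def assms by (simp add: algebra_simps)

lemma alpha_series_sh:
  assumes "\<And>n. a n (sh k x) = a (n + k) x" "\<And>n. b n (sh k x) = b (n + k) x"
  shows "alpha_series a b r d n (sh k x) = alpha_series a b r d (n + k) x"
  unfolding alpha_series_def using alpha_term_sh[of a k x b, OF assms] by simp

lemma ma_part_loc:
  assumes "\<forall>j\<in>{m - int q..m}. x j = x' j"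
  shows "ma_part mu c q ee m x = ma_part mu c q ee m x'"
proof -
  have "(\<Sum>i=1..q. c i * x (m - int i)) = (\<Sum>i=1..q. c i * x' (m - int i))"
    using assms by (intro sum.cong) auto
  then show ?thesis using assms by (simp add: ma_part_def ee_def)
qed

definition Yh where
  "Yh mu1 mu2 phi psi q r d x = (\<lambda>n. ma_part mu2 psi q ee n x +
     (ma_part mu1 phi q ee n x - ma_part mu2 psi q ee n x) *
     alpha_series (ma_part mu2 psi q ee) (ma_part mu1 phi q ee) r d n x)"

lemma Yh_meas[measurable]: "Yh mu1 mu2 phi psi q r d \<in> measurable PS PS"
proof -
  have [measurable]: "alpha_series (ma_part mu2 psi q ee) (ma_part mu1 phi q ee) r d n \<in> borel_measurable PS" for n
    by (intro alpha_series_meas) auto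
  show ?thesis unfolding Yh_def
    by (rule measurable_PiM_single') (auto simp: space_PiM)
qed

lemma Yh_sh: "Yh mu1 mu2 phi psi q r d (sh k x) = sh k (Yh mu1 mu2 phi psi q r d x)"
proof (rule ext)
  fix n
  have "alpha_series (ma_part mu2 psi q ee) (ma_part mu1 phi q ee) r d n (sh k x) =
    alpha_series (ma_part mu2 psi q ee) (ma_part mu1 phi q ee) r d (n + k) x"
    by (intro alpha_series_sh ma_part_sh)
  then show "Yh mu1 mu2 phi psi q r d (sh k x) n = sh k (Yh mu1 mu2 phi psi q r d x) n"
    unfolding Yh_def by (simp add: ma_part_sh sh_def[of k "Yh _ _ _ _ _ _ _ x"]) (simp add: sh_def)
qed

theorem theorem2p1:
  fixes M :: "'a measure" and e :: "int \<Rightarrow> 'a \<Rightarrow> real"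
    and q d :: nat and r mu1 mu2 :: real and phi psi :: "nat \<Rightarrow> real"
  defines "a \<equiv> ma_part mu2 psi q e"
    and "b \<equiv> ma_part mu1 phi q e"
  defines "y \<equiv> (\<lambda>n \<omega>. a n \<omega> +
              ((mu1 - mu2) + (\<Sum>i=1..q. (phi i - psi i) * e (n - int i) \<omega>))
              * alpha_series a b r d n \<omega>)"
  assumes "prob_space M"
    and "iid_seq M e"
    and "q \<ge> 1" and "d \<ge> 1"
    and "\<forall>n. measure M {\<omega>\<in>space M. a n \<omega> \<le> r \<and> b n \<omega> \<le> r}
            + measure M {\<omega>\<in>space M. a n \<omega> > r \<and> b n \<omega> > r} \<noteq> 0"
  shows "(\<forall>n. (AE \<omega> in M. summable (\<lambda>j. alpha_term a b r d n (Suc j) \<omega>))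
             \<and> integrable M (alpha_series a b r d n)
             \<and> ((\<lambda>N. LINT \<omega>|M. \<bar>(\<Sum>j<N. alpha_term a b r d n (Suc j) \<omega>)
                                   - alpha_series a b r d n \<omega>\<bar>) \<longlonglongrightarrow> 0))
       \<and> (\<forall>n. y n \<in> borel_measurable M)
       \<and> tma_solution M e q d r mu1 mu2 phi psi y
       \<and> strictly_stationary M y
       \<and> ergodic_process M y
       \<and> (\<forall>y'. (\<forall>n. y' n \<in> borel_measurable M) \<and> tma_solution M e q d r mu1 mu2 phi psi y'
              \<longrightarrow> (\<forall>n. AE \<omega> in M. y' n \<omega> = y n \<omega>))"
proof -
  interpret iid_ctx M e using \<open>prob_space M\<close> \<open>iid_seq M e\<close>
    by (simp add: iid_ctx_def iid_ctx_axioms_def)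
  define A where "A = ma_part mu2 psi q ee"
  define B where "B = ma_part mu1 phi q ee"
  define L where "L = distr M PS (Ef e)"
  define Y where "Y = Yh mu1 mu2 phi psi q r d"
  interpret S: shift_indep L unfolding L_def by (rule L_shift_indep)
  have aE: "a n \<omega> = A n (Ef e \<omega>)" for n \<omega> unfolding a_def A_def by (simp add: ma_part_def ee_def Ef_def)
  have bE: "b n \<omega> = B n (Ef e \<omega>)" for n \<omega> unfolding b_def B_def by (simp add: ma_part_def ee_def Ef_def)
  have alE: "alpha_term a b r d n j \<omega> = alpha_term A B r d n j (Ef e \<omega>)" for n j \<omega>
    by (simp add: alpha_term_def aE bE)
  have asE: "alpha_series a b r d n \<omega> = alpha_series A B r d n (Ef e \<omega>)" for n \<omega>
    by (simp add: alpha_series_def alE)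
  have WE: "Wf a b r m \<omega> = Wf A B r m (Ef e \<omega>)" for m \<omega> by (simp add: Wf_def aE bE)
  have bma: "b n \<omega> - a n \<omega> = (mu1 - mu2) + (\<Sum>i=1..q. (phi i - psi i) * e (n - int i) \<omega>)" for n \<omega>
    unfolding a_def b_def by (rule ma_diff)
  have y_alt: "y n \<omega> = a n \<omega> + (b n \<omega> - a n \<omega>) * alpha_series a b r d n \<omega>" for n \<omega>
    unfolding y_def bma by simp
  have y_fun: "y = (\<lambda>n \<omega>. a n \<omega> + (b n \<omega> - a n \<omega>) * alpha_series a b r d n \<omega>)"
    by (intro ext) (rule y_alt)
  have yE: "y n \<omega> = Y (Ef e \<omega>) n" for n \<omega>
    unfolding y_alt Y_def Yh_def by (simp add: aE bE asE A_def B_def)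
  have a_meas[measurable]: "a n \<in> borel_measurable M" for n unfolding a_def ma_part_def by measurable
  have b_meas[measurable]: "b n \<in> borel_measurable M" for n unfolding b_def ma_part_def by measurable
  have A_meas[measurable]: "A n \<in> borel_measurable PS" for n unfolding A_def by measurable
  have B_meas[measurable]: "B n \<in> borel_measurable PS" for n unfolding B_def by measurable
  have Y_meas[measurable]: "Y \<in> measurable PS PS" unfolding Y_def by (rule Yh_meas)
  have YE_meas: "(\<lambda>\<omega>. Y (Ef e \<omega>)) \<in> measurable M PS"
    by (rule measurable_compose[OF E_meas Y_meas])
  have y_meas: "y n \<in> borel_measurable M" for n
  proof -
    have "(\<lambda>\<omega>. Y (Ef e \<omega>) n) \<in> borel_measurable M"
      by (rule measurable_compose[OF YE_meas measurable_component_singleton]) simp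
    moreover have "y n = (\<lambda>\<omega>. Y (Ef e \<omega>) n)" by (intro ext) (rule yE)
    ultimately show ?thesis by simp
  qed
  have Wm: "Wf A B r m \<in> borel_measurable PS" for m unfolding Wf_def by measurable
  have Wloc: "Wf A B r m x = Wf A B r m x'" if "\<forall>j\<in>{m - int q..m}. x j = x' j" for m x x'
    unfolding Wf_def A_def B_def using ma_part_loc[OF that] by simp
  have Wsh: "Wf A B r m x = Wf A B r 0 (sh m x)" for m x
    unfolding Wf_def A_def B_def by (simp add: ma_part_sh)
  have p: "S.prob {x. Wf A B r 0 x = 0} > 0"
  proof -
    have Zs: "{x. Wf A B r 0 x = 0} \<in> sets PS"
    proof -
      have "{x \<in> space PS. Wf A B r 0 x = 0} \<in> sets PS" using Wm[of 0] by measurable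
      then show ?thesis by (simp add: space_PS)
    qed
    have "S.prob {x. Wf A B r 0 x = 0} = prob (Ef e -` {x. Wf A B r 0 x = 0} \<inter> space M)"
      unfolding L_def using Zs by (intro measure_distr) auto
    also have "Ef e -` {x. Wf A B r 0 x = 0} \<inter> space M =
        {\<omega>\<in>space M. a 0 \<omega> \<le> r \<and> b 0 \<omega> \<le> r} \<union> {\<omega>\<in>space M. a 0 \<omega> > r \<and> b 0 \<omega> > r}"
      by (auto simp: Wf_def aE bE)
    also have "prob \<dots> = prob {\<omega>\<in>space M. a 0 \<omega> \<le> r \<and> b 0 \<omega> \<le> r} + prob {\<omega>\<in>space M. a 0 \<omega> > r \<and> b 0 \<omega> > r}"
      by (intro finite_measure_Union) auto
    finally have eq: "S.prob {x. Wf A B r 0 x = 0} = prob {\<omega>\<in>space M. a 0 \<omega> \<le> r \<and> b 0 \<omega> \<le> r} + prob {\<omega>\<in>space M. a 0 \<omega> > r \<and> b 0 \<omega> > r}" .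
    have "prob {\<omega>\<in>space M. a 0 \<omega> \<le> r \<and> b 0 \<omega> \<le> r} + prob {\<omega>\<in>space M. a 0 \<omega> > r \<and> b 0 \<omega> > r} \<noteq> 0"
      using assms(8) by blast
    moreover have "prob {\<omega>\<in>space M. a 0 \<omega> \<le> r \<and> b 0 \<omega> \<le> r} \<ge> 0" "prob {\<omega>\<in>space M. a 0 \<omega> > r \<and> b 0 \<omega> > r} \<ge> 0"
      by auto
    ultimately show ?thesis unfolding eq by linarith
  qed
  have K: "AE \<omega> in M. \<exists>J\<ge>1. Wf a b r (n - int J * int d) \<omega> = 0" for n
  proof -
    have "AE x in L. \<exists>J\<ge>1. Wf A B r (n - int J * int d) x = 0"
      by (rule S.vanish_AE[OF Wm Wloc Wsh p \<open>d \<ge> 1\<close>])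
    then have "AE \<omega> in M. \<exists>J\<ge>1. Wf A B r (n - int J * int d) (Ef e \<omega>) = 0"
      unfolding L_def by (rule AE_distrD[OF E_meas])
    then show ?thesis by (simp add: WE)
  qed
  have part1: "(AE \<omega> in M. summable (\<lambda>j. alpha_term a b r d n (Suc j) \<omega>))
             \<and> integrable M (alpha_series a b r d n)
             \<and> ((\<lambda>N. LINT \<omega>|M. \<bar>(\<Sum>j<N. alpha_term a b r d n (Suc j) \<omega>)
                                   - alpha_series a b r d n \<omega>\<bar>) \<longlonglongrightarrow> 0)" for n
  proof (intro conjI)
    show "AE \<omega> in M. summable (\<lambda>j. alpha_term a b r d n (Suc j) \<omega>)"
      using K[of n] by eventually_elim (metis alpha_eq_Sf(1))
    have al_meas: "alpha_series a b r d n \<in> borel_measurable M"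
      by (rule alpha_series_meas[OF a_meas b_meas])
    have bnd: "AE \<omega> in M. \<bar>alpha_series a b r d n \<omega>\<bar> \<le> 1"
      using K[of n]
    proof eventually_elim
      case (elim \<omega>)
      then obtain J where "J \<ge> 1" "Wf a b r (n - int J * int d) \<omega> = 0" by auto
      then have "alpha_series a b r d n \<omega> = Sf a b r d n J \<omega>" by (rule alpha_eq_Sf(2))
      then show ?case using Sf_01[of a b r d n J \<omega>] by auto
    qed
    show "integrable M (alpha_series a b r d n)"
      using bnd al_meas by (intro integrable_const_bound[where B=1]) auto
    have Sf_meas: "(\<lambda>\<omega>. \<bar>(\<Sum>j<N. alpha_term a b r d n (Suc j) \<omega>) - alpha_series a b r d n \<omega>\<bar>) \<in> borel_measurable M" for N
    proof -
      have "alpha_term a b r d n (Suc j) \<in> borel_measurable M" for j by (rule alpha_term_meas[OF a_meas b_meas])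
      then show ?thesis using al_meas by measurable
    qed
    define sN where "sN N \<omega> = \<bar>(\<Sum>j<N. alpha_term a b r d n (Suc j) \<omega>) - alpha_series a b r d n \<omega>\<bar>" for N \<omega>
    have lim: "AE \<omega> in M. (\<lambda>N. sN N \<omega>) \<longlonglongrightarrow> 0"
      using K[of n]
    proof eventually_elim
      case (elim \<omega>)
      then obtain J where J: "J \<ge> 1" "Wf a b r (n - int J * int d) \<omega> = 0" by auto
      have "sN N \<omega> = 0" if "N \<ge> J" for N
      proof -
        have "sN N \<omega> = \<bar>Sf a b r d n N \<omega> - alpha_series a b r d n \<omega>\<bar>" by (simp add: sN_def Sf_def)
        also have "Sf a b r d n N \<omega> = Sf a b r d n J \<omega>" by (rule alpha_eq_Sf(3)[OF J that])
        also have "alpha_series a b r d n \<omega> = Sf a b r d n J \<omega>" by (rule alpha_eq_Sf(2)[OF J])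
        finally show ?thesis by simp
      qed
      then show ?case
        by (intro tendsto_eventually) (auto simp: eventually_sequentially)
    qed
    have bound: "AE \<omega> in M. norm (sN N \<omega>) \<le> 2" for N
      using bnd
    proof eventually_elim
      case (elim \<omega>)
      have "\<bar>(\<Sum>j<N. alpha_term a b r d n (Suc j) \<omega>)\<bar> \<le> 1"
        using Sf_01[of a b r d n N \<omega>] by (auto simp: Sf_def)
      then show ?case using elim by (simp add: sN_def)
    qed
    have sm: "sN N \<in> borel_measurable M" for N
      unfolding sN_def[abs_def] by (rule Sf_meas)
    have "(\<lambda>N. integral\<^sup>L M (sN N)) \<longlonglongrightarrow> integral\<^sup>L M (\<lambda>_. 0)"
      by (rule integral_dominated_convergence[where w="\<lambda>_. 2" and s=sN and f="\<lambda>_. 0", OF _ sm _ lim bound]) auto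
    then show "(\<lambda>N. LINT \<omega>|M. \<bar>(\<Sum>j<N. alpha_term a b r d n (Suc j) \<omega>) - alpha_series a b r d n \<omega>\<bar>) \<longlonglongrightarrow> 0"
      by (simp add: sN_def[abs_def])
  qed
  have tma: "tma_solution M e q d r mu1 mu2 phi psi y"
    unfolding tma_solution_def
  proof
    fix n
    show "AE \<omega> in M. y n \<omega> = (if y (n - int d) \<omega> \<le> r then ma_part mu1 phi q e n \<omega> else ma_part mu2 psi q e n \<omega>)"
      using K[of "n - int d"]
    proof eventually_elim
      case (elim \<omega>)
      then obtain J where J: "J \<ge> 1" "Wf a b r (n - int d - int J * int d) \<omega> = 0" by auto
      have "a n \<omega> + (b n \<omega> - a n \<omega>) * alpha_series a b r d n \<omega> =
        (if a (n - int d) \<omega> + (b (n - int d) \<omega> - a (n - int d) \<omega>) * alpha_series a b r d (n - int d) \<omega> \<le> r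
         then b n \<omega> else a n \<omega>)"
        by (rule tma_det[of J a b r n d \<omega>, OF J])
      then show ?case by (simp only: y_alt a_def b_def)
    qed
  qed
  have PL: "proc_law M (\<lambda>n. y (n + k)) = distr L PS Y" for k
  proof -
    have "(\<lambda>\<omega> n. y (n + k) \<omega>) = (Y \<circ> sh k) \<circ> Ef e"
      by (auto simp: fun_eq_iff yE Y_def Yh_sh) (simp add: sh_def)
    then have "proc_law M (\<lambda>n. y (n + k)) = distr L PS (Y \<circ> sh k)"
      unfolding proc_law_def L_def by (simp add: distr_distr)
    also have "\<dots> = distr (distr L PS (sh k)) PS Y"
      by (subst distr_distr) (auto simp: measurable_cong_sets[OF S.sets_L])
    also have "\<dots> = distr L PS Y" using S.shift_inv by simp
    finally show ?thesis .
  qed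
  have stat: "strictly_stationary M y"
    unfolding strictly_stationary_def using PL PL[of 0] by simp
  have erg: "ergodic_process M y"
    unfolding ergodic_process_def
  proof (intro ballI impI)
    fix Aa assume Aa: "Aa \<in> sets PS" and inv: "(\<lambda>x n. x (n + 1)) -` Aa = Aa"
    have sh1: "sh 1 = (\<lambda>x n. x (n + 1))" by (auto simp: fun_eq_iff sh_def)
    have YA: "Y -` Aa \<in> sets PS" using measurable_sets[OF Y_meas Aa] by (simp add: space_PS)
    have "sh 1 -` (Y -` Aa) = Y -` (sh 1 -` Aa)"
      by (auto simp: Y_def Yh_sh)
    then have inv2: "sh 1 -` (Y -` Aa) = Y -` Aa" using inv sh1 by simp
    have "measure (proc_law M y) Aa = S.prob (Y -` Aa \<inter> space L)"
      using PL[of 0] Aa by (simp add: measure_distr measurable_cong_sets[OF S.sets_L])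
    then have "measure (proc_law M y) Aa = S.prob (Y -` Aa)" by (simp add: S.space_L)
    then show "measure (proc_law M y) Aa = 0 \<or> measure (proc_law M y) Aa = 1"
      using S.ergodic[OF YA inv2] by simp
  qed
  have uniq: "\<forall>n. AE \<omega> in M. y' n \<omega> = y n \<omega>"
    if "(\<forall>n. y' n \<in> borel_measurable M) \<and> tma_solution M e q d r mu1 mu2 phi psi y'" for y'
  proof
    fix n
    have "AE \<omega> in M. \<forall>m. y' m \<omega> = (if y' (m - int d) \<omega> \<le> r then b m \<omega> else a m \<omega>)"
      using that unfolding tma_solution_def AE_all_countable a_def b_def by simp
    then show "AE \<omega> in M. y' n \<omega> = y n \<omega>"
      using K[of n]
    proof eventually_elim
      case (elim \<omega>)
      then obtain J where J: "J \<ge> 1" "Wf a b r (n - int J * int d) \<omega> = 0" by auto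
      have "y' n \<omega> = a n \<omega> + (b n \<omega> - a n \<omega>) * alpha_series a b r d n \<omega>"
        by (rule uniq_det[of y' \<omega> d r b a, OF elim(1)[rule_format] J])
      then show ?case by (simp add: y_alt)
    qed
  qed
  show ?thesis using uniq by (simp add: part1 y_meas tma stat erg)
qed

end
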